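(* Let $\tau\in[0,1]$, let $P$ be a real symmetric positive semidefinite $n\times n$ matrix, and let $\theta$ satisfy $0<\theta<((1-\tau)\|P\|)^{-1}$ (interpreted as $\theta>0$ when $\tau=1$ or $P=0$). Then: (1) the function $\vartheta\mapsto\gamma_\tau(P,\vartheta)$ is monotone increasing on $\{\vartheta>0:\ \vartheta(1-\tau)\|P\|<1\}$; (2) if $Q$ is a symmetric positive semidefinite $n\times n$ matrix with $P\ge Q$, then $\gamma_\tau(P,\theta)\ge\gamma_\tau(Q,\theta)$; (3) if $P\neq0$, then $\gamma_\tau(P,\theta)>0$.
   Context: $\|\cdot\|$ is the spectral norm; $\ge$ the Loewner order. For $P$ positive semidefinite, $L_P$ is any matrix with $P=L_PL_P^T$; matrix powers and $\exp$ of symmetric matrices are defined through eigendecomposition. The function $\gamma_\tau$: for positive semidefinite $P$ and $\theta\ge0$ with $\theta(1-\tau)\|P\|<1$, $\gamma_0(P,\theta)=-\log\det((I_n-\theta P)^{-1})+\mathrm{tr}((I_n-\theta P)^{-1}-I_n)$; for $0<\tau<1$, $\gamma_\tau(P,\theta)=\mathrm{tr}\big(-\frac{1}{\tau(1-\tau)}(I_n-\theta(1-\tau)L_P^TL_P)^{\frac{\tau}{\tau-1}}+\frac1{1-\tau}(I_n-\theta(1-\tau)L_P^TL_P)^{\frac{1}{\tau-1}}+\frac1\tau I_n\big)$; $\gamma_1(P,\theta)=\mathrm{tr}(\exp(\theta L_P^TL_P)(\theta L_P^TL_P-I_n)+I_n)$. (The value does not depend on the choice of $L_P$.) *)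

theory Defs
  imports "HOL-Analysis.Analysis"
begin

definition psd :: "real^'n^'n \<Rightarrow> bool" where
  "psd A \<longleftrightarrow> transpose A = A \<and> (\<forall>x. 0 \<le> x \<bullet> (A *v x))"

definition loewner_ge :: "real^'n^'n \<Rightarrow> real^'n^'n \<Rightarrow> bool" where
  "loewner_ge A B \<longleftrightarrow> psd (A - B)"

definition spec_norm :: "real^'n^'n \<Rightarrow> real" where
  "spec_norm A = onorm (\<lambda>x. A *v x)"

definition diag_mat :: "real^'n \<Rightarrow> real^'n^'n" where
  "diag_mat d = (\<chi> i j. if i = j then d $ i else 0)"

definition mat_fun :: "(real \<Rightarrow> real) \<Rightarrow> real^'n^'n \<Rightarrow> real^'n^'n" where
  "mat_fun f A = (SOME B. \<exists>U d. orthogonal_matrix U \<and> A = U ** diag_mat d ** transpose U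
                     \<and> B = U ** diag_mat (\<chi> i. f (d $ i)) ** transpose U)"

text \<open>A factor L_P with P = L_P L_P^T (the value of gamma does not depend on the choice).\<close>
definition factor :: "real^'n^'n \<Rightarrow> real^'n^'n" where
  "factor P = (SOME L. P = L ** transpose L)"

definition gamma :: "real \<Rightarrow> real^'n^'n \<Rightarrow> real \<Rightarrow> real" where
  "gamma \<tau> P \<theta> =
    (if \<tau> = 0 then
       - ln (det (matrix_inv (mat 1 - \<theta> *\<^sub>R P))) + trace (matrix_inv (mat 1 - \<theta> *\<^sub>R P) - mat 1)
     else if \<tau> < 1 then
       (let L = factor P; M = mat 1 - (\<theta> * (1 - \<tau>)) *\<^sub>R (transpose L ** L) in
        trace (- (1 / (\<tau> * (1 - \<tau>))) *\<^sub>R mat_fun (\<lambda>x. x powr (\<tau> / (\<tau> - 1))) M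
               + (1 / (1 - \<tau>)) *\<^sub>R mat_fun (\<lambda>x. x powr (1 / (\<tau> - 1))) M
               + (1 / \<tau>) *\<^sub>R mat 1))
     else
       (let L = factor P; K = \<theta> *\<^sub>R (transpose L ** L) in
        trace (mat_fun exp K ** (K - mat 1) + mat 1)))"

end

theory Submission
  imports Defs
begin

definition decomp :: "real^'n^'n \<Rightarrow> real^'n \<Rightarrow> real^'n^'n \<Rightarrow> bool" where
  "decomp U d A \<longleftrightarrow> orthogonal_matrix U \<and> A = U ** diag_mat d ** transpose U"

lemma mul_diag_right: "(A ** diag_mat d) $ i $ j = A $ i $ j * d $ j"
  by (simp add: matrix_matrix_mult_def diag_mat_def if_distrib cong: if_cong)

lemma mul_diag_left: "(diag_mat d ** A) $ i $ j = d $ i * A $ i $ j"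
proof -
  have e: "(\<lambda>k. (if i = k then d$i else 0) * A$k$j) = (\<lambda>k. if k = i then d$i * A$i$j else 0)"
    by (auto simp: fun_eq_iff)
  have "(diag_mat d ** A) $ i $ j = (\<Sum>k\<in>UNIV. (if i = k then d$i else 0) * A$k$j)"
    unfolding matrix_matrix_mult_def diag_mat_def by simp
  also have "\<dots> = d $ i * A $ i $ j" unfolding e by simp
  finally show ?thesis .
qed

lemma diag_mul_diag: "diag_mat a ** diag_mat b = diag_mat (\<chi> i. a$i * b$i)"
  by (simp add: vec_eq_iff mul_diag_right) (simp add: diag_mat_def)

lemma mat1_diag: "mat 1 = diag_mat (\<chi> i. 1)"
  by (simp add: mat_def diag_mat_def vec_eq_iff)

lemma orth_UUt: "orthogonal_matrix U \<Longrightarrow> U ** transpose U = mat 1"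
  by (simp add: orthogonal_matrix_def)
lemma orth_UtU: "orthogonal_matrix U \<Longrightarrow> transpose U ** U = mat 1"
  by (simp add: orthogonal_matrix_def)
lemma orth_c1: "orthogonal_matrix U \<Longrightarrow> transpose U ** (U ** X) = X"
  by (simp add: matrix_mul_assoc orth_UtU)
lemma orth_c2: "orthogonal_matrix U \<Longrightarrow> U ** (transpose U ** X) = X"
  by (simp add: matrix_mul_assoc orth_UUt)

lemma trace_decomp:
  assumes "orthogonal_matrix U"
  shows "trace (U ** diag_mat d ** transpose U) = (\<Sum>i\<in>UNIV. d $ i)"
proof -
  have "trace (U ** diag_mat d ** transpose U) = trace (U ** (diag_mat d ** transpose U))"
    by (simp add: matrix_mul_assoc)
  also have "\<dots> = trace ((diag_mat d ** transpose U) ** U)" by (rule trace_mul_sym)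
  also have "\<dots> = trace (diag_mat d)"
    by (simp add: matrix_mul_assoc[symmetric] orth_UtU[OF assms])
  also have "\<dots> = (\<Sum>i\<in>UNIV. d $ i)" by (simp add: trace_def diag_mat_def)
  finally show ?thesis .
qed

lemma WWt_diag: "(W ** transpose W) $ i $ i = (\<Sum>j\<in>UNIV. (W$i$j)^2)"
  by (simp add: matrix_matrix_mult_def transpose_def power2_eq_square)
lemma WtW_diag: "(transpose W ** W) $ j $ j = (\<Sum>i\<in>UNIV. (W$i$j)^2)"
  by (simp add: matrix_matrix_mult_def transpose_def power2_eq_square)

lemma sum_transfer:
  fixes W :: "real^'n^'n" and g :: "real \<Rightarrow> real"
  assumes "\<And>i j. W$i$j * (a$j - b$i) = 0"
  shows "(\<Sum>j\<in>UNIV. (\<Sum>i\<in>UNIV. (W$i$j)^2) * g (a$j)) = (\<Sum>i\<in>UNIV. (\<Sum>j\<in>UNIV. (W$i$j)^2) * g (b$i))"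
proof -
  have e: "(W$i$j)^2 * g (a$j) = (W$i$j)^2 * g (b$i)" for i j
  proof (cases "W$i$j = 0")
    case False with assms[of i j] have "a$j = b$i" by simp
    then show ?thesis by simp
  qed simp
  have "(\<Sum>j\<in>UNIV. (\<Sum>i\<in>UNIV. (W$i$j)^2) * g (a$j)) = (\<Sum>j\<in>UNIV. \<Sum>i\<in>UNIV. (W$i$j)^2 * g (b$i))"
    by (simp add: sum_distrib_right e)
  also have "\<dots> = (\<Sum>i\<in>UNIV. \<Sum>j\<in>UNIV. (W$i$j)^2 * g (b$i))" by (rule sum.swap)
  also have "\<dots> = (\<Sum>i\<in>UNIV. (\<Sum>j\<in>UNIV. (W$i$j)^2) * g (b$i))" by (simp add: sum_distrib_right)
  finally show ?thesis .
qed

lemma rel_from_eq: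
  fixes W :: "real^'n^'n"
  assumes "W ** diag_mat a = diag_mat b ** W"
  shows "W$i$j * (a$j - b$i) = 0"
proof -
  have "(W ** diag_mat a)$i$j = (diag_mat b ** W)$i$j" using assms by simp
  then show ?thesis by (simp add: mul_diag_right mul_diag_left algebra_simps)
qed

lemma decomp_indep:
  fixes g :: "real \<Rightarrow> real"
  assumes "decomp U a A" "decomp V b A"
  shows "(\<Sum>j\<in>UNIV. g (a$j)) = (\<Sum>i\<in>UNIV. g (b$i))"
proof -
  have U: "orthogonal_matrix U" and V: "orthogonal_matrix V" using assms by (auto simp: decomp_def)
  define W where "W = transpose V ** U"
  have "transpose W ** W = transpose U ** (V ** transpose V) ** U"
    by (simp add: W_def matrix_transpose_mul matrix_mul_assoc)
  also have "\<dots> = mat 1" by (simp add: orth_UUt[OF V] orth_UtU[OF U])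
  finally have c: "transpose W ** W = mat 1" .
  have "W ** transpose W = transpose V ** (U ** transpose U) ** V"
    by (simp add: W_def matrix_transpose_mul matrix_mul_assoc)
  also have "\<dots> = mat 1" by (simp add: orth_UUt[OF U] orth_UtU[OF V])
  finally have r: "W ** transpose W = mat 1" .
  have "W ** diag_mat a = transpose V ** (U ** diag_mat a ** transpose U) ** U"
    by (simp add: W_def matrix_mul_assoc[symmetric] orth_c1[OF U] orth_UtU[OF U])
  also have "\<dots> = transpose V ** (V ** diag_mat b ** transpose V) ** U"
    using assms by (simp add: decomp_def)
  also have "\<dots> = diag_mat b ** W"
    by (simp add: W_def matrix_mul_assoc[symmetric] orth_c1[OF V] orth_UtU[OF V])
  finally have rel: "\<And>i j. W$i$j * (a$j - b$i) = 0" by (rule rel_from_eq)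
  have cs: "(\<Sum>i\<in>UNIV. (W$i$j)^2) = 1" for j
    using c WtW_diag[of W j] by (simp add: mat_def)
  have rs: "(\<Sum>j\<in>UNIV. (W$i$j)^2) = 1" for i
    using r WWt_diag[of W i] by (simp add: mat_def)
  show ?thesis using sum_transfer[OF rel, of g] by (simp add: cs rs)
qed

lemma decomp_transfer:
  fixes L :: "real^'n^'n" and h :: "real \<Rightarrow> real"
  assumes "decomp U a (transpose L ** L)" "decomp V b (L ** transpose L)" "h 0 = 0"
  shows "(\<Sum>j\<in>UNIV. h (a$j)) = (\<Sum>i\<in>UNIV. h (b$i))"
proof -
  have U: "orthogonal_matrix U" and V: "orthogonal_matrix V" using assms by (auto simp: decomp_def)
  define W where "W = transpose V ** L ** U"
  have "transpose W ** W = transpose U ** transpose L ** (V ** transpose V) ** L ** U"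
    by (simp add: W_def matrix_transpose_mul matrix_mul_assoc)
  also have "\<dots> = transpose U ** (transpose L ** L) ** U" by (simp add: orth_UUt[OF V] matrix_mul_assoc)
  also have "\<dots> = transpose U ** (U ** diag_mat a ** transpose U) ** U" using assms by (simp add: decomp_def)
  also have "\<dots> = diag_mat a" by (simp add: matrix_mul_assoc[symmetric] orth_c1[OF U] orth_UtU[OF U])
  finally have c: "transpose W ** W = diag_mat a" .
  have "W ** transpose W = transpose V ** L ** (U ** transpose U) ** transpose L ** V"
    by (simp add: W_def matrix_transpose_mul matrix_mul_assoc)
  also have "\<dots> = transpose V ** (L ** transpose L) ** V" by (simp add: orth_UUt[OF U] matrix_mul_assoc)
  also have "\<dots> = transpose V ** (V ** diag_mat b ** transpose V) ** V" using assms by (simp add: decomp_def)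
  also have "\<dots> = diag_mat b" by (simp add: matrix_mul_assoc[symmetric] orth_c1[OF V] orth_UtU[OF V])
  finally have r: "W ** transpose W = diag_mat b" .
  have "W ** diag_mat a = (W ** transpose W) ** W" by (simp add: c[symmetric] matrix_mul_assoc)
  also have "\<dots> = diag_mat b ** W" by (simp add: r)
  finally have rel: "\<And>i j. W$i$j * (a$j - b$i) = 0" by (rule rel_from_eq)
  have cs: "(\<Sum>i\<in>UNIV. (W$i$j)^2) = a$j" for j
    using c WtW_diag[of W j] by (simp add: diag_mat_def)
  have rs: "(\<Sum>j\<in>UNIV. (W$i$j)^2) = b$i" for i
    using r WWt_diag[of W i] by (simp add: diag_mat_def)
  define g where "g x = h x / x" for x
  have hg: "h x = x * g x" for x using assms(3) by (cases "x = 0") (auto simp: g_def)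
  show ?thesis using sum_transfer[OF rel, of g] by (simp add: cs rs hg)
qed

lemma sym_inner:
  fixes A :: "real^'n^'n"
  assumes "transpose A = A"
  shows "x \<bullet> (A *v y) = (A *v x) \<bullet> y"
proof -
  have "x \<bullet> (A *v y) = (x v* A) \<bullet> y" by (simp add: dot_lmul_matrix)
  also have "x v* A = transpose A *v x" by simp
  finally show ?thesis using assms by simp
qed

lemma quad_nonpos_imp:
  fixes c d :: real
  assumes "\<And>t. 2 * t * c + t^2 * d \<le> 0" "c \<ge> 0"
  shows "c = 0"
proof (rule ccontr)
  assume "c \<noteq> 0" then have c: "c > 0" using assms(2) by simp
  define t where "t = c / (\<bar>d\<bar> + 1)"
  have tp: "t > 0" using c by (simp add: t_def add_pos_nonneg)
  have a: "t^2 * d \<ge> - (t^2 * \<bar>d\<bar>)"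
  proof -
    have "- d \<le> \<bar>d\<bar>" by simp
    then have "t^2 * (- d) \<le> t^2 * \<bar>d\<bar>" by (rule mult_left_mono) simp
    then show ?thesis by simp
  qed
  have b: "t * \<bar>d\<bar> < c"
  proof -
    have "t * \<bar>d\<bar> = c * (\<bar>d\<bar> / (\<bar>d\<bar> + 1))" by (simp add: t_def)
    also have "\<dots> < c * 1" using c by (intro mult_strict_left_mono) auto
    finally show ?thesis by simp
  qed
  have "t * (t * \<bar>d\<bar>) < t * c" using b tp by (rule mult_strict_left_mono)
  moreover have "t * t * d \<ge> - (t * (t * \<bar>d\<bar>))" using a by (simp add: power2_eq_square mult.assoc)
  moreover have "t * c > 0" using tp c by simp
  ultimately have "2 * t * c + t^2 * d > 0" by (simp add: power2_eq_square)
  then show False using assms(1)[of t] by simp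
qed

lemma eigvec_exists:
  fixes A :: "real^'n^'n"
  assumes sym: "transpose A = A" and S: "subspace S" and inv: "\<And>x. x \<in> S \<Longrightarrow> A *v x \<in> S"
    and ne: "x0 \<in> S" "x0 \<noteq> 0"
  shows "\<exists>v\<in>S. norm v = 1 \<and> A *v v = (v \<bullet> (A *v v)) *\<^sub>R v"
proof -
  define K where "K = S \<inter> sphere 0 1"
  have "compact K" unfolding K_def
    by (intro closed_Int_compact closed_subspace S compact_sphere)
  moreover have "K \<noteq> {}"
  proof -
    have "(1 / norm x0) *\<^sub>R x0 \<in> K" using ne S by (simp add: K_def subspace_scale)
    then show ?thesis by blast
  qed
  moreover have "continuous_on K (\<lambda>x. x \<bullet> (A *v x))"
    by (intro continuous_intros linear_continuous_on matrix_vector_mul_bounded_linear)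
  ultimately obtain v where vK: "v \<in> K" and vmax: "\<And>y. y \<in> K \<Longrightarrow> y \<bullet> (A *v y) \<le> v \<bullet> (A *v v)"
    using continuous_attains_sup by metis
  define l where "l = v \<bullet> (A *v v)"
  have vS: "v \<in> S" and nv: "norm v = 1" using vK by (auto simp: K_def)
  have vv: "v \<bullet> v = 1" using nv by (simp add: norm_eq_1)
  have bound: "x \<bullet> (A *v x) \<le> l * (x \<bullet> x)" if xS: "x \<in> S" for x
  proof (cases "x = 0")
    case False
    define y where "y = (1 / norm x) *\<^sub>R x"
    have "y \<in> K" using False xS S by (simp add: K_def y_def subspace_scale)
    then have "y \<bullet> (A *v y) \<le> l" using vmax l_def by simp
    moreover have "y \<bullet> (A *v y) = (x \<bullet> (A *v x)) / (norm x)^2"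
      by (simp add: y_def matrix_vector_mult_scaleR power2_eq_square)
    moreover have "(norm x)^2 = x \<bullet> x" by (simp add: power2_norm_eq_inner)
    moreover have "norm x > 0" using False by simp
    ultimately show ?thesis by (simp add: divide_le_eq)
  qed simp
  define w where "w = A *v v - l *\<^sub>R v"
  have wS: "w \<in> S" using vS inv S by (simp add: w_def subspace_diff subspace_scale)
  have wv: "w \<bullet> v = 0" by (simp add: w_def inner_diff_left vv l_def inner_commute[of "A *v v" v])
  have key: "2 * t * (w \<bullet> w) + t^2 * (w \<bullet> (A *v w) - l * (w \<bullet> w)) \<le> 0" for t
  proof -
    have "v + t *\<^sub>R w \<in> S" using vS wS S by (simp add: subspace_add subspace_scale)
    from bound[OF this]
    have "(v + t *\<^sub>R w) \<bullet> (A *v (v + t *\<^sub>R w)) \<le> l * ((v + t *\<^sub>R w) \<bullet> (v + t *\<^sub>R w))" .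
    moreover have e1: "w \<bullet> (A *v v) = w \<bullet> w"
    proof -
      have "w \<bullet> w = w \<bullet> (A *v v) - l * (w \<bullet> v)" by (simp add: w_def inner_diff_right)
      then show ?thesis using wv by simp
    qed
    moreover have e2: "v \<bullet> (A *v w) = w \<bullet> (A *v v)"
      using sym_inner[OF sym, of v w] by (simp add: inner_commute)
    moreover have e3: "(t *\<^sub>R w) \<bullet> (A *v v) = t * (w \<bullet> w)" using e1 by simp
    moreover have e4: "v \<bullet> w = 0" using wv by (simp add: inner_commute)
    ultimately show ?thesis
      by (simp add: matrix_vector_right_distrib matrix_vector_mult_scaleR inner_add_left inner_add_right
          l_def[symmetric] vv wv e4 power2_eq_square algebra_simps)
  qed
  have "w \<bullet> w = 0" by (rule quad_nonpos_imp[OF key]) simp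
  then have "w = 0" by simp
  then show ?thesis using vS nv by (auto simp: w_def l_def)
qed

lemma spectral_sub:
  fixes A :: "real^'n^'n"
  assumes sym: "transpose A = A"
  shows "subspace S \<Longrightarrow> (\<forall>x\<in>S. A *v x \<in> S) \<Longrightarrow>
    \<exists>B. B \<subseteq> S \<and> pairwise orthogonal B \<and> (\<forall>x\<in>B. norm x = 1) \<and>
        (\<forall>x\<in>B. A *v x = (x \<bullet> (A *v x)) *\<^sub>R x) \<and> span B = S"
proof (induction "dim S" arbitrary: S rule: less_induct)
  case less
  show ?case
  proof (cases "\<exists>x\<in>S. x \<noteq> 0")
    case False
    then have "S = {0}" using subspace_0[OF less.prems(1)] by auto
    then show ?thesis by (intro exI[of _ "{}"]) auto
  next
    case True
    then obtain x0 where x0: "x0 \<in> S" "x0 \<noteq> 0" by blast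
    obtain v where vS: "v \<in> S" and nv: "norm v = 1" and ev: "A *v v = (v \<bullet> (A *v v)) *\<^sub>R v"
      using eigvec_exists[OF sym less.prems(1) _ x0] less.prems(2) by blast
    define l where "l = v \<bullet> (A *v v)"
    have vv: "v \<bullet> v = 1" using nv by (simp add: norm_eq_1)
    define S' where "S' = {x \<in> S. v \<bullet> x = 0}"
    have sub': "subspace S'"
      using less.prems(1) unfolding S'_def subspace_def
      by (auto simp: inner_add_right)
    have inv': "\<forall>x\<in>S'. A *v x \<in> S'"
    proof
      fix x assume x: "x \<in> S'"
      have "v \<bullet> (A *v x) = (A *v v) \<bullet> x" by (rule sym_inner[OF sym])
      also have "\<dots> = l * (v \<bullet> x)" using ev unfolding l_def by (metis inner_scaleR_left)
      also have "\<dots> = 0" using x by (simp add: S'_def)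
      finally show "A *v x \<in> S'" using x less.prems(2) by (simp add: S'_def)
    qed
    have "span S' \<subset> span S"
    proof -
      have "v \<notin> S'" using vv by (simp add: S'_def)
      moreover have "S' \<subseteq> S" by (auto simp: S'_def)
      ultimately have "S' \<subset> S" using vS by blast
      then show ?thesis by (simp only: span_eq_iff[THEN iffD2, OF sub'] span_eq_iff[THEN iffD2, OF less.prems(1)])
    qed
    then have "dim S' < dim S" by (rule dim_psubset)
    from less.hyps[OF this sub' inv'] obtain B' where
      B': "B' \<subseteq> S'" "pairwise orthogonal B'" "\<forall>x\<in>B'. norm x = 1"
          "\<forall>x\<in>B'. A *v x = (x \<bullet> (A *v x)) *\<^sub>R x" "span B' = S'" by blast
    define B where "B = insert v B'"
    have ov: "\<And>y. y \<in> B' \<Longrightarrow> v \<bullet> y = 0" using B'(1) by (auto simp: S'_def)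
    have ov2: "\<And>y. y \<in> B' \<Longrightarrow> y \<bullet> v = 0" using ov by (simp add: inner_commute)
    have "B \<subseteq> S" using B'(1) vS by (auto simp: B_def S'_def)
    moreover have "pairwise orthogonal B"
      unfolding B_def pairwise_insert using B'(2) ov ov2 by (simp add: orthogonal_def)
    moreover have "\<forall>x\<in>B. norm x = 1" using B'(3) nv by (simp add: B_def)
    moreover have "\<forall>x\<in>B. A *v x = (x \<bullet> (A *v x)) *\<^sub>R x" using B'(4) ev by (simp add: B_def)
    moreover have "span B = S"
    proof
      show "span B \<subseteq> S" using \<open>B \<subseteq> S\<close> less.prems(1) by (simp add: span_minimal)
      show "S \<subseteq> span B"
      proof
        fix x assume x: "x \<in> S"
        have "x - (v \<bullet> x) *\<^sub>R v \<in> S'"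
          using x vS less.prems(1) vv by (simp add: S'_def subspace_diff subspace_scale inner_diff_right)
        then show "x \<in> span B" unfolding B_def span_breakdown_eq B'(5) by blast
      qed
    qed
    ultimately show ?thesis by (intro exI[of _ B]) simp
  qed
qed

lemma spectral:
  fixes A :: "real^'n^'n"
  assumes sym: "transpose A = A"
  shows "\<exists>U d. decomp U d A"
proof -
  obtain B where B: "pairwise orthogonal B" "\<forall>x\<in>B. norm x = 1"
        "\<forall>x\<in>B. A *v x = (x \<bullet> (A *v x)) *\<^sub>R x" "span B = UNIV"
    using spectral_sub[OF sym, of UNIV] by auto
  have indep: "independent B"
    using B(1,2) by (intro pairwise_orthogonal_independent) auto
  then have finB: "finite B" using finiteI_independent by blast
  have "card B = dim (span B)" using dim_span_eq_card_independent[OF indep] by simp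
  also have "\<dots> = CARD('n)" using B(4) by simp
  finally have cB: "card (UNIV::'n set) = card B" by simp
  obtain g where g: "bij_betw g (UNIV::'n set) B"
    using finite_same_card_bij[OF _ finB cB] by auto
  have gB: "g i \<in> B" for i using g by (auto simp: bij_betw_def)
  have ginj: "g i = g j \<Longrightarrow> i = j" for i j using g by (auto simp: bij_betw_def inj_def)
  define U :: "real^'n^'n" where "U = (\<chi> r c. g c $ r)"
  define d :: "real^'n" where "d = (\<chi> c. g c \<bullet> (A *v g c))"
  have "transpose U ** U = mat 1"
  proof -
    have "(transpose U ** U) $ i $ j = g i \<bullet> g j" for i j
      by (simp add: U_def matrix_matrix_mult_def transpose_def inner_vec_def)
    moreover have "g i \<bullet> g j = (if i = j then 1 else 0)" for i j
    proof (cases "i = j")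
      case True then show ?thesis using B(2) gB[of i] by (simp add: norm_eq_1)
    next
      case False then have "g i \<noteq> g j" using ginj by blast
      then show ?thesis using False B(1) gB[of i] gB[of j] by (auto simp: pairwise_def orthogonal_def)
    qed
    ultimately show ?thesis by (simp add: vec_eq_iff mat_def)
  qed
  then have U: "orthogonal_matrix U" by (simp add: orthogonal_matrix)
  have AU: "A ** U = U ** diag_mat d"
  proof -
    have "(A ** U) $ r $ c = (A *v g c) $ r" for r c
      by (simp add: U_def matrix_matrix_mult_def matrix_vector_mult_def)
    also have "(A *v g c) $ r = d $ c * g c $ r" for r c
    proof -
      have "A *v g c = (g c \<bullet> (A *v g c)) *\<^sub>R g c" using B(3) gB[of c] by blast
      then have "(A *v g c) $ r = ((g c \<bullet> (A *v g c)) *\<^sub>R g c) $ r"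
        by (rule arg_cong[where f="\<lambda>v. v $ r"])
      then show ?thesis by (simp only: vector_scaleR_component d_def vec_lambda_beta real_scaleR_def)
    qed
    finally show ?thesis by (simp add: vec_eq_iff mul_diag_right U_def)
  qed
  have "A = A ** (U ** transpose U)" by (simp add: orth_UUt[OF U])
  also have "\<dots> = U ** diag_mat d ** transpose U" by (simp add: matrix_mul_assoc AU)
  finally show ?thesis using U unfolding decomp_def by blast
qed

definition Hf :: "real \<Rightarrow> real \<Rightarrow> real" where
  "Hf \<tau> x = (if \<tau> = 0 then ln (1 - x) + 1 / (1 - x) - 1
    else if \<tau> < 1 then
      - (1 / (\<tau> * (1 - \<tau>))) * (1 - (1 - \<tau>) * x) powr (\<tau> / (\<tau> - 1))
      + (1 / (1 - \<tau>)) * (1 - (1 - \<tau>) * x) powr (1 / (\<tau> - 1)) + 1 / \<tau>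
    else exp x * (x - 1) + 1)"

definition Hd :: "real \<Rightarrow> real \<Rightarrow> real" where
  "Hd \<tau> x = (if \<tau> = 0 then x / (1 - x)^2
    else if \<tau> < 1 then
      ((1 - (1 - \<tau>) * x) powr (1 / (\<tau> - 1) - 1) - (1 - (1 - \<tau>) * x) powr (1 / (\<tau> - 1))) / (1 - \<tau>)
    else x * exp x)"

lemma aux_nz: "0 < (\<tau>::real) \<Longrightarrow> \<tau> < 1 \<Longrightarrow> \<tau> + \<tau> * (\<tau> * \<tau>) \<noteq> \<tau> * (\<tau> * 2)"
proof -
  assume a: "0 < \<tau>" "\<tau> < 1"
  have "0 < \<tau> * ((1 - \<tau>) * (1 - \<tau>))" using a by simp
  moreover have "\<tau> * ((1 - \<tau>) * (1 - \<tau>)) = \<tau> + \<tau> * (\<tau> * \<tau>) - \<tau> * (\<tau> * 2)" by (simp add: algebra_simps)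
  ultimately show ?thesis by linarith
qed

lemma aux_nz2: "0 < (\<tau>::real) \<Longrightarrow> \<tau> < 1 \<Longrightarrow> \<tau> * (\<tau> * 2) \<noteq> \<tau> + \<tau> * (\<tau> * \<tau>)"
  using aux_nz by metis

lemma Hf_0: "0 \<le> \<tau> \<Longrightarrow> \<tau> \<le> 1 \<Longrightarrow> Hf \<tau> 0 = 0"
proof -
  assume a: "0 \<le> \<tau>" "\<tau> \<le> 1"
  show ?thesis
  proof (cases "0 < \<tau> \<and> \<tau> < 1")
    case True
    then have h1: "\<tau> \<noteq> 0" and h2: "1 - \<tau> \<noteq> 0" by auto
    have "Hf \<tau> 0 = - (1 / (\<tau> * (1 - \<tau>))) + 1 / (1 - \<tau>) + 1 / \<tau>" using True by (simp add: Hf_def)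
    also have "\<dots> = 0"
    proof -
      from True have t1: "0 < \<tau>" and t2: "\<tau> < 1" by auto
      then show ?thesis by (simp add: field_split_simps aux_nz aux_nz2)
    qed
    finally show ?thesis .
  next
    case False
    then have "\<tau> = 0 \<or> \<tau> = 1" using a by auto
    then show ?thesis by (auto simp: Hf_def)
  qed
qed

lemma dom_mono: "0 \<le> \<tau> \<Longrightarrow> \<tau> \<le> 1 \<Longrightarrow> z \<le> y \<Longrightarrow> (1 - \<tau>) * y < 1 \<Longrightarrow> (1 - \<tau>) * z < (1::real)"
proof -
  assume a: "0 \<le> \<tau>" "\<tau> \<le> 1" "z \<le> y" "(1 - \<tau>) * y < 1"
  have "(1 - \<tau>) * z \<le> (1 - \<tau>) * y" using a by (intro mult_left_mono) auto
  then show ?thesis using a by linarith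
qed

lemma ring_aux: "- p * (q * X * (- w)) + r * (s * Y * (- w)) + 0 = (p * q * w) * X - (r * w) * s * (Y::real)"
  by (simp add: algebra_simps)

lemma Hf_deriv:
  assumes "0 \<le> \<tau>" "\<tau> \<le> 1" "(1 - \<tau>) * x < 1"
  shows "(Hf \<tau> has_real_derivative Hd \<tau> x) (at x)"
proof -
  consider "\<tau> = 0" | "0 < \<tau>" "\<tau> < 1" | "\<tau> = 1" using assms by linarith
  then show ?thesis
  proof cases
    case 1
    then have x: "x < 1" using assms by simp
    have e: "Hf \<tau> = (\<lambda>x. ln (1 - x) + 1 / (1 - x) - 1)" using 1 by (simp add: Hf_def fun_eq_iff)
    have "((\<lambda>x. ln (1 - x) + 1 / (1 - x) - 1) has_real_derivative
          (inverse (1 - x) * (0 - 1) + (- (0 - 1) / (1 - x)^2) - 0)) (at x)"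
      using x by (auto intro!: derivative_eq_intros simp: power2_eq_square inverse_eq_divide)
    moreover have "inverse (1 - x) * (0 - 1) + (- (0 - 1) / (1 - x)^2) - 0 = x / (1 - x)^2"
      using x by (simp add: divide_simps) (simp add: algebra_simps power2_eq_square)
    moreover have "Hd \<tau> x = x / (1 - x)^2" using 1 by (simp add: Hd_def)
    ultimately show ?thesis using e by simp
  next
    case 2
    define u where "u = 1 - (1 - \<tau>) * x"
    have u: "u > 0" using assms by (simp add: u_def)
    define b where "b = 1 / (\<tau> - 1)"
    have ab: "\<tau> / (\<tau> - 1) - 1 = b" using 2 by (simp add: b_def field_simps)
    have bb: "1 / (\<tau> - 1) - 1 = b - 1" by (simp add: b_def)
    have du: "((\<lambda>x. 1 - (1 - \<tau>) * x) has_real_derivative - (1 - \<tau>)) (at x)"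
      by (auto intro!: derivative_eq_intros)
    have d1: "((\<lambda>x. (1 - (1 - \<tau>) * x) powr (\<tau> / (\<tau> - 1))) has_real_derivative
        (\<tau> / (\<tau> - 1)) * u powr b * (- (1 - \<tau>))) (at x)"
      using DERIV_fun_powr[OF du, of "\<tau> / (\<tau> - 1)"] u by (simp add: u_def ab)
    have d2: "((\<lambda>x. (1 - (1 - \<tau>) * x) powr (1 / (\<tau> - 1))) has_real_derivative
        (1 / (\<tau> - 1)) * u powr (b - 1) * (- (1 - \<tau>))) (at x)"
      using DERIV_fun_powr[OF du, of "1 / (\<tau> - 1)"] u by (simp add: u_def bb)
    have e: "Hf \<tau> = (\<lambda>x. - (1 / (\<tau> * (1 - \<tau>))) * (1 - (1 - \<tau>) * x) powr (\<tau> / (\<tau> - 1))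
      + (1 / (1 - \<tau>)) * (1 - (1 - \<tau>) * x) powr (1 / (\<tau> - 1)) + 1 / \<tau>)"
      using 2 by (simp add: Hf_def fun_eq_iff)
    have "(Hf \<tau> has_real_derivative
        - (1 / (\<tau> * (1 - \<tau>))) * ((\<tau> / (\<tau> - 1)) * u powr b * (- (1 - \<tau>)))
        + (1 / (1 - \<tau>)) * ((1 / (\<tau> - 1)) * u powr (b - 1) * (- (1 - \<tau>))) + 0) (at x)"
      unfolding e by (intro DERIV_add DERIV_cmult d1 d2 DERIV_const)
    moreover have "- (1 / (\<tau> * (1 - \<tau>))) * ((\<tau> / (\<tau> - 1)) * u powr b * (- (1 - \<tau>)))
        + (1 / (1 - \<tau>)) * ((1 / (\<tau> - 1)) * u powr (b - 1) * (- (1 - \<tau>))) + 0 = Hd \<tau> x"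
    proof -
      have c1: "(1 / (\<tau> * (1 - \<tau>))) * (\<tau> / (\<tau> - 1)) * (1 - \<tau>) = b"
        using 2 by (simp add: b_def field_split_simps aux_nz aux_nz2)
      have c2: "(1 / (1 - \<tau>)) * (1 - \<tau>) = 1" using 2 by simp
      have c3: "b = - (1 / (1 - \<tau>))" using 2 by (simp add: b_def field_split_simps aux_nz aux_nz2)
      have "- (1 / (\<tau> * (1 - \<tau>))) * ((\<tau> / (\<tau> - 1)) * u powr b * (- (1 - \<tau>)))
        + (1 / (1 - \<tau>)) * ((1 / (\<tau> - 1)) * u powr (b - 1) * (- (1 - \<tau>))) + 0
        = ((1 / (\<tau> * (1 - \<tau>))) * (\<tau> / (\<tau> - 1)) * (1 - \<tau>)) * u powr b
          - ((1 / (1 - \<tau>)) * (1 - \<tau>)) * (1 / (\<tau> - 1)) * u powr (b - 1)"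
        by (rule ring_aux)
      also have "\<dots> = b * u powr b - b * u powr (b - 1)" unfolding c1 c2 b_def by simp
      also have "\<dots> = (1 / (1 - \<tau>)) * (u powr (b - 1) - u powr b)"
        unfolding c3 by (simp add: algebra_simps)
      also have "\<dots> = (u powr (b - 1) - u powr b) / (1 - \<tau>)" by simp
      also have "\<dots> = Hd \<tau> x" using 2 by (simp add: Hd_def u_def b_def)
      finally show ?thesis .
    qed
    ultimately show ?thesis by simp
  next
    case 3
    have e: "Hf \<tau> = (\<lambda>x. exp x * (x - 1) + 1)" using 3 by (simp add: Hf_def fun_eq_iff)
    have "((\<lambda>x. exp x * (x - 1) + 1) has_real_derivative exp x * (x - 1) + exp x * (1 - 0) + 0) (at x)"
      by (auto intro!: derivative_eq_intros)
    then show ?thesis using 3 e by (simp add: Hd_def algebra_simps)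
  qed
qed

lemma Hd_mid:
  assumes "0 < \<tau>" "\<tau> < 1" "(1 - \<tau>) * x < 1"
  shows "Hd \<tau> x = (1 - (1 - \<tau>) * x) powr (1 / (\<tau> - 1) - 1) * ((1 - \<tau>) * x) / (1 - \<tau>)"
proof -
  define u where "u = 1 - (1 - \<tau>) * x"
  have u: "u > 0" using assms by (simp add: u_def)
  have "u powr (1 / (\<tau> - 1)) = u powr (1 / (\<tau> - 1) - 1) * u"
    using u by (simp add: powr_diff)
  then show ?thesis using assms by (simp add: Hd_def u_def[symmetric] algebra_simps)
       (simp add: u_def algebra_simps)
qed

lemma Hd_props:
  assumes "0 \<le> \<tau>" "\<tau> \<le> 1" "0 \<le> x" "x \<le> y" "(1 - \<tau>) * y < 1"
  shows "0 \<le> Hd \<tau> x" "Hd \<tau> x \<le> Hd \<tau> y" "0 < x \<Longrightarrow> 0 < Hd \<tau> x"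
proof -
  consider "\<tau> = 0" | "0 < \<tau>" "\<tau> < 1" | "\<tau> = 1" using assms by linarith
  then have "0 \<le> Hd \<tau> x \<and> Hd \<tau> x \<le> Hd \<tau> y \<and> (0 < x \<longrightarrow> 0 < Hd \<tau> x)"
  proof cases
    case 1
    then have y: "y < 1" using assms by simp
    have "(1 - y)^2 \<le> (1 - x)^2" using assms y by (intro power_mono) auto
    then have "x / (1 - x)^2 \<le> y / (1 - y)^2" using assms y
      by (intro frac_le) auto
    then show ?thesis using 1 assms y by (simp add: Hd_def)
  next
    case 2
    have xd: "(1 - \<tau>) * x < 1" using dom_mono[OF assms(1,2,4,5)] .
    define c where "c = 1 / (\<tau> - 1) - 1"
    have c: "c \<le> 0" using 2 by (simp add: c_def divide_simps)
    have ux: "0 < 1 - (1 - \<tau>) * x" using xd by simp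
    have "(1 - \<tau>) * x \<le> (1 - \<tau>) * y" using assms by (intro mult_left_mono) auto
    then have uxy: "1 - (1 - \<tau>) * y \<le> 1 - (1 - \<tau>) * x" by simp
    have p1: "(1 - (1 - \<tau>) * x) powr c \<le> (1 - (1 - \<tau>) * y) powr c"
      using assms by (intro powr_mono2' c) (auto simp: uxy)
    have p2: "(1 - \<tau>) * x \<le> (1 - \<tau>) * y" using assms 2 by (intro mult_left_mono) auto
    have nn: "0 \<le> (1 - \<tau>) * x" using assms 2 by simp
    have "(1 - (1 - \<tau>) * x) powr c * ((1 - \<tau>) * x) \<le> (1 - (1 - \<tau>) * y) powr c * ((1 - \<tau>) * y)"
      using p1 p2 nn assms 2 by (intro mult_mono) auto
    moreover have "0 < x \<Longrightarrow> 0 < (1 - (1 - \<tau>) * x) powr c * ((1 - \<tau>) * x)"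
      using ux 2 by simp
    ultimately show ?thesis
      using Hd_mid[OF 2 xd] Hd_mid[OF 2 assms(5)] 2 nn ux assms unfolding c_def
      by (simp add: divide_right_mono)
  next
    case 3
    have "x * exp x \<le> y * exp y" using assms by (intro mult_mono) auto
    then show ?thesis using 3 assms by (simp add: Hd_def)
  qed
  then show "0 \<le> Hd \<tau> x" "Hd \<tau> x \<le> Hd \<tau> y" "0 < x \<Longrightarrow> 0 < Hd \<tau> x" by auto
qed


lemma Hf_mono:
  assumes "0 \<le> \<tau>" "\<tau> \<le> 1" "0 \<le> x" "x \<le> y" "(1 - \<tau>) * y < 1"
  shows "Hf \<tau> x \<le> Hf \<tau> y"
proof (rule DERIV_nonneg_imp_nondecreasing[OF assms(4)])
  fix z :: real assume z: "x \<le> z" "z \<le> y"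
  have "(1 - \<tau>) * z < 1" using dom_mono[OF assms(1,2) z(2) assms(5)] .
  then show "\<exists>d. (Hf \<tau> has_real_derivative d) (at z) \<and> 0 \<le> d"
    using Hf_deriv[OF assms(1,2)] Hd_props(1)[of \<tau> z z] assms z by fastforce
qed

lemma Hf_nonneg:
  assumes "0 \<le> \<tau>" "\<tau> \<le> 1" "0 \<le> x" "(1 - \<tau>) * x < 1"
  shows "0 \<le> Hf \<tau> x"
  using Hf_mono[OF assms(1,2) order_refl assms(3) assms(4)] Hf_0[OF assms(1,2)] by simp

lemma Hf_pos:
  assumes "0 \<le> \<tau>" "\<tau> \<le> 1" "0 < x" "(1 - \<tau>) * x < 1"
  shows "0 < Hf \<tau> x"
proof -
  have "Hf \<tau> 0 < Hf \<tau> x"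
  proof (rule DERIV_pos_imp_increasing_open[OF assms(3)])
    fix z :: real assume z: "0 < z" "z < x"
    have "(1 - \<tau>) * z < 1" using dom_mono[OF assms(1,2) _ assms(4)] z by simp
    then show "\<exists>d. (Hf \<tau> has_real_derivative d) (at z) \<and> 0 < d"
      using Hf_deriv[OF assms(1,2)] Hd_props(3)[of \<tau> z z] assms z by fastforce
  next
    show "continuous_on {0..x} (Hf \<tau>)"
    proof (rule DERIV_atLeastAtMost_imp_continuous_on)
      fix z :: real assume z: "0 \<le> z" "z \<le> x"
      have "(1 - \<tau>) * z < 1" using dom_mono[OF assms(1,2) z(2) assms(4)] .
      then show "\<exists>d. (Hf \<tau> has_real_derivative d) (at z)" using Hf_deriv[OF assms(1,2)] by blast
    qed
  qed
  then show ?thesis using Hf_0[OF assms(1,2)] by simp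
qed

lemma Hf_conv:
  assumes "0 \<le> \<tau>" "\<tau> \<le> 1" "0 < \<theta>" "(1 - \<tau>) * (\<theta> * R) < 1"
  shows "convex_on {0..R} (\<lambda>x. Hf \<tau> (\<theta> * x))"
proof (rule convex_on_realI[where f'="\<lambda>x. Hd \<tau> (\<theta> * x) * \<theta>"])
  show "connected {0..R}" by simp
next
  fix x :: real assume x: "x \<in> {0..R}"
  have "\<theta> * x \<le> \<theta> * R" using x assms by (intro mult_left_mono) auto
  then have "(1 - \<tau>) * (\<theta> * x) < 1" using dom_mono[OF assms(1,2) _ assms(4)] by blast
  from Hf_deriv[OF assms(1,2) this] show "((\<lambda>x. Hf \<tau> (\<theta> * x)) has_real_derivative Hd \<tau> (\<theta> * x) * \<theta>) (at x)"
    by (rule DERIV_chain2) (auto intro!: derivative_eq_intros)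
next
  fix x y :: real assume xy: "x \<in> {0..R}" "y \<in> {0..R}" "x \<le> y"
  have "\<theta> * y \<le> \<theta> * R" using xy assms by (intro mult_left_mono) auto
  then have "(1 - \<tau>) * (\<theta> * y) < 1" using dom_mono[OF assms(1,2) _ assms(4)] by blast
  moreover have "\<theta> * x \<le> \<theta> * y" using xy assms by (intro mult_left_mono) auto
  ultimately have "Hd \<tau> (\<theta> * x) \<le> Hd \<tau> (\<theta> * y)"
    using Hd_props(2)[OF assms(1,2)] xy assms by simp
  then show "Hd \<tau> (\<theta> * x) * \<theta> \<le> Hd \<tau> (\<theta> * y) * \<theta>" using assms by (simp add: mult_right_mono)
qed

lemma decomp_AU: "decomp U d A \<Longrightarrow> A ** U = U ** diag_mat d"
  by (simp add: decomp_def matrix_mul_assoc[symmetric] orth_UtU)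

lemma decomp_UtAU: "decomp U d A \<Longrightarrow> transpose U ** A ** U = diag_mat d"
  by (simp add: decomp_def matrix_mul_assoc[symmetric] orth_c1 orth_UtU)

lemma quad_entry: "(transpose V ** M ** V) $ i $ i = column i V \<bullet> (M *v column i V)"
proof -
  have "(transpose V ** M ** V) $ i $ i = (\<Sum>k\<in>UNIV. (\<Sum>l\<in>UNIV. V$l$i * M$l$k) * V$k$i)"
    by (simp add: matrix_matrix_mult_def transpose_def)
  also have "\<dots> = (\<Sum>k\<in>UNIV. \<Sum>l\<in>UNIV. V$l$i * M$l$k * V$k$i)" by (simp add: sum_distrib_right)
  also have "\<dots> = (\<Sum>l\<in>UNIV. \<Sum>k\<in>UNIV. V$l$i * M$l$k * V$k$i)" by (rule sum.swap)
  also have "\<dots> = (\<Sum>l\<in>UNIV. V$l$i * (\<Sum>k\<in>UNIV. M$l$k * V$k$i))" by (simp add: sum_distrib_left mult.assoc)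
  also have "\<dots> = column i V \<bullet> (M *v column i V)"
    by (simp add: inner_vec_def column_def matrix_vector_mult_def)
  finally show ?thesis .
qed

lemma decomp_eig_quad: "decomp U d A \<Longrightarrow> d $ j = column j U \<bullet> (A *v column j U)"
  using decomp_UtAU[of U d A] quad_entry[of U A j] by (simp add: diag_mat_def)

lemma decomp_eig_vec: "decomp U d A \<Longrightarrow> A *v column j U = d $ j *\<^sub>R column j U"
proof -
  assume a: "decomp U d A"
  have "(A *v column j U) $ r = (A ** U) $ r $ j" for r
    by (simp add: column_def matrix_vector_mult_def matrix_matrix_mult_def)
  then show ?thesis using decomp_AU[OF a] by (simp add: vec_eq_iff mul_diag_right column_def mult.commute)
qed

lemma decomp_col_norm: "decomp U d A \<Longrightarrow> norm (column j U) = 1"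
  by (simp add: decomp_def orthogonal_matrix_orthonormal_columns)

lemma decomp_psd_nonneg: "decomp U d A \<Longrightarrow> psd A \<Longrightarrow> 0 \<le> d $ j"
  using decomp_eig_quad[of U d A j] by (simp add: psd_def)

lemma decomp_le_norm: "decomp U d A \<Longrightarrow> \<bar>d $ j\<bar> \<le> spec_norm A"
proof -
  assume a: "decomp U d A"
  have "norm (A *v column j U) \<le> onorm ((*v) A) * norm (column j U)"
    by (rule onorm) simp
  then show ?thesis using decomp_eig_vec[OF a, of j] decomp_col_norm[OF a, of j]
    by (simp add: spec_norm_def)
qed

lemma udu_entry: "(U ** diag_mat d ** transpose U) $ i $ j = (\<Sum>k\<in>UNIV. U$i$k * d$k * U$j$k)"
  unfolding matrix_matrix_mult_def[of "U ** diag_mat d" "transpose U"]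
  by (simp add: transpose_def mul_diag_right)

lemma diag_mul_diag': "diag_mat a ** (diag_mat b ** X) = diag_mat (\<chi> i. a$i * b$i) ** X"
  by (simp add: matrix_mul_assoc diag_mul_diag)

lemma decomp_affine:
  assumes "decomp U d A"
  shows "decomp U (\<chi> i. a + b * d$i) (a *\<^sub>R mat 1 + b *\<^sub>R A)"
proof -
  have U: "orthogonal_matrix U" using assms by (simp add: decomp_def)
  have I: "mat 1 = U ** diag_mat (\<chi> i. 1) ** transpose U"
    by (simp add: mat1_diag[symmetric] orth_UUt[OF U])
  have "a *\<^sub>R mat 1 + b *\<^sub>R A = U ** diag_mat (\<chi> i. a + b * d$i) ** transpose U"
  proof -
    have "(a *\<^sub>R mat 1 + b *\<^sub>R A) $ i $ j = (U ** diag_mat (\<chi> i. a + b * d$i) ** transpose U) $ i $ j" for i j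
    proof -
      have "(a *\<^sub>R mat 1 + b *\<^sub>R A) $ i $ j = a * (mat 1 :: real^'a^'a) $ i $ j + b * A $ i $ j" by simp
      also have "\<dots> = a * (\<Sum>k\<in>UNIV. U$i$k * 1 * U$j$k) + b * (\<Sum>k\<in>UNIV. U$i$k * d$k * U$j$k)"
        using assms unfolding decomp_def by (subst I) (simp add: udu_entry)
      also have "\<dots> = (\<Sum>k\<in>UNIV. U$i$k * (a + b * d$k) * U$j$k)"
        by (simp add: sum_distrib_left sum.distrib[symmetric] algebra_simps)
      also have "\<dots> = (U ** diag_mat (\<chi> i. a + b * d$i) ** transpose U) $ i $ j" by (simp add: udu_entry)
      finally show ?thesis .
    qed
    then show ?thesis by (simp add: vec_eq_iff)
  qed
  then show ?thesis using U by (simp add: decomp_def)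
qed

lemma decomp_mul:
  assumes "orthogonal_matrix U"
  shows "(U ** diag_mat a ** transpose U) ** (U ** diag_mat b ** transpose U) = U ** diag_mat (\<chi> i. a$i * b$i) ** transpose U"
  by (simp add: matrix_mul_assoc[symmetric] orth_c1[OF assms] diag_mul_diag')

lemma matrix_inv_eq: "A ** B = mat 1 \<Longrightarrow> B ** A = mat 1 \<Longrightarrow> matrix_inv (A::real^'n^'n) = B"
proof -
  assume ab: "A ** B = mat 1" and ba: "B ** A = mat 1"
  have ex: "\<exists>A'. A ** A' = mat 1 \<and> A' ** A = mat 1" using ab ba by blast
  define C where "C = matrix_inv A"
  have C: "A ** C = mat 1 \<and> C ** A = mat 1" unfolding C_def matrix_inv_def by (rule someI_ex[OF ex])
  have "C = C ** (A ** B)" by (simp add: ab)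
  also have "\<dots> = (C ** A) ** B" by (simp add: matrix_mul_assoc)
  also have "\<dots> = B" using C by simp
  finally show ?thesis by (simp add: C_def)
qed

lemma decomp_inv:
  assumes "orthogonal_matrix U" "\<And>i. d $ i \<noteq> 0"
  shows "matrix_inv (U ** diag_mat d ** transpose U) = U ** diag_mat (\<chi> i. 1 / d$i) ** transpose U"
proof -
  have one: "U ** diag_mat (\<chi> i. 1) ** transpose U = mat 1" by (simp add: mat1_diag[symmetric] orth_UUt[OF assms(1)])
  have e1: "(\<chi> i. d$i * (\<chi> i. 1 / d$i)$i) = (\<chi> i. 1)" using assms(2) by (simp add: vec_eq_iff)
  have e2: "(\<chi> i. (\<chi> i. 1 / d$i)$i * d$i) = (\<chi> i. 1)" using assms(2) by (simp add: vec_eq_iff)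
  show ?thesis
    by (rule matrix_inv_eq) (simp_all only: decomp_mul[OF assms(1)] e1 e2 one)
qed

lemma det_decomp:
  assumes "orthogonal_matrix U"
  shows "det (U ** diag_mat d ** transpose U) = (\<Prod>i\<in>UNIV. d $ i)"
proof -
  have "det U * det U = 1"
    using det_mul[of "transpose U" U] orth_UtU[OF assms] by simp
  moreover have "det (diag_mat d) = (\<Prod>i\<in>UNIV. d $ i)"
    by (subst det_diagonal) (auto simp: diag_mat_def)
  ultimately show ?thesis by (simp add: det_mul)
qed

lemma mat_fun_decomp:
  assumes "decomp U d A"
  shows "\<exists>U' d'. decomp U' d' A \<and> mat_fun f A = U' ** diag_mat (\<chi> i. f (d'$i)) ** transpose U'"
proof -
  have ex: "\<exists>B. \<exists>U d. orthogonal_matrix U \<and> A = U ** diag_mat d ** transpose U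
                     \<and> B = U ** diag_mat (\<chi> i. f (d $ i)) ** transpose U"
    using assms unfolding decomp_def by blast
  show ?thesis using someI_ex[OF ex] unfolding mat_fun_def[symmetric] decomp_def by blast
qed

lemma trace_mat_fun:
  assumes "decomp U d A"
  shows "trace (mat_fun f A) = (\<Sum>i\<in>UNIV. f (d $ i))"
proof -
  obtain U' d' where D: "decomp U' d' A" and M: "mat_fun f A = U' ** diag_mat (\<chi> i. f (d'$i)) ** transpose U'"
    using mat_fun_decomp[OF assms] by blast
  have "trace (mat_fun f A) = (\<Sum>i\<in>UNIV. f (d' $ i))"
    using D M by (simp add: decomp_def trace_decomp)
  also have "\<dots> = (\<Sum>i\<in>UNIV. f (d $ i))" by (rule decomp_indep[OF D assms])
  finally show ?thesis .
qed

lemma trace_scaleR: "trace (c *\<^sub>R (A::real^'n^'n)) = c * trace A"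
  by (simp add: trace_def sum_distrib_left)

lemma psd_factor:
  fixes P :: "real^'n^'n"
  assumes "psd P"
  shows "P = factor P ** transpose (factor P)"
proof -
  obtain U p where D: "decomp U p P" using spectral[of P] assms by (auto simp: psd_def)
  have U: "orthogonal_matrix U" using D by (simp add: decomp_def)
  define L :: "real^'n^'n" where "L = U ** diag_mat (\<chi> i. sqrt (p$i))"
  have "L ** transpose L = U ** (diag_mat (\<chi> i. sqrt (p$i)) ** transpose (diag_mat (\<chi> i. sqrt (p$i)))) ** transpose U"
    by (simp add: L_def matrix_transpose_mul matrix_mul_assoc)
  also have "transpose (diag_mat (\<chi> i. sqrt (p$i))) = diag_mat (\<chi> i. sqrt (p$i))"
    by (simp add: diag_mat_def transpose_def vec_eq_iff)
  also have "diag_mat (\<chi> i. sqrt (p$i)) ** diag_mat (\<chi> i. sqrt (p$i)) = diag_mat p"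
    using decomp_psd_nonneg[OF D assms] by (simp add: diag_mul_diag vec_eq_iff)
  finally have "P = L ** transpose L" using D by (simp add: decomp_def matrix_mul_assoc)
  then have "\<exists>L::real^'n^'n. P = L ** transpose L" by blast
  then show ?thesis unfolding factor_def by (rule someI_ex)
qed

lemma gamma_zero:
  fixes P :: "real^'n^'n"
  assumes D: "decomp U p P" and lt: "\<And>j. \<theta> * p$j < 1"
  shows "gamma 0 P \<theta> = (\<Sum>j\<in>UNIV. Hf 0 (\<theta> * p$j))"
proof -
  have U: "orthogonal_matrix U" using D by (simp add: decomp_def)
  define m :: "real^'n" where "m = (\<chi> i. 1 + (- \<theta>) * p$i)"
  have mpos: "0 < m$i" for i using lt[of i] by (simp add: m_def)
  have M: "mat 1 - \<theta> *\<^sub>R P = U ** diag_mat m ** transpose U"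
    using decomp_affine[OF D, of 1 "- \<theta>"] by (simp add: decomp_def m_def)
  have Minv: "matrix_inv (mat 1 - \<theta> *\<^sub>R P) = U ** diag_mat (\<chi> i. 1 / m$i) ** transpose U"
    unfolding M using mpos by (intro decomp_inv[OF U]) (simp add: less_imp_neq[symmetric])
  have "ln (det (matrix_inv (mat 1 - \<theta> *\<^sub>R P))) = ln (\<Prod>i\<in>UNIV. 1 / m$i)"
    unfolding Minv det_decomp[OF U] by simp
  also have "\<dots> = (\<Sum>i\<in>UNIV. ln (1 / m$i))"
    using mpos by (intro ln_prod) (auto simp: less_imp_neq[symmetric])
  also have "\<dots> = (\<Sum>i\<in>UNIV. - ln (m$i))"
    using mpos by (intro sum.cong) (auto simp: ln_div)
  finally have l: "ln (det (matrix_inv (mat 1 - \<theta> *\<^sub>R P))) = (\<Sum>i\<in>UNIV. - ln (m$i))" .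
  have t: "trace (matrix_inv (mat 1 - \<theta> *\<^sub>R P) - mat 1) = (\<Sum>i\<in>UNIV. 1 / m$i - 1)"
    unfolding Minv by (simp add: trace_sub trace_decomp[OF U] trace_I sum_subtractf)
  have "gamma 0 P \<theta> = (\<Sum>i\<in>UNIV. ln (m$i)) + (\<Sum>i\<in>UNIV. 1 / m$i - 1)"
    unfolding gamma_def using l t by (simp add: sum_negf)
  also have "\<dots> = (\<Sum>j\<in>UNIV. Hf 0 (\<theta> * p$j))"
    by (simp add: sum.distrib[symmetric] Hf_def m_def add_diff_eq)
  finally show ?thesis .
qed

lemma gamma_mid:
  fixes P :: "real^'n^'n"
  assumes t: "0 < \<tau>" "\<tau> < 1" and D: "decomp U k (transpose (factor P) ** factor P)"
  shows "gamma \<tau> P \<theta> = (\<Sum>j\<in>UNIV. Hf \<tau> (\<theta> * k$j))"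
proof -
  define L where "L = factor P"
  define M where "M = mat 1 - (\<theta> * (1 - \<tau>)) *\<^sub>R (transpose L ** L)"
  have DM: "decomp U (\<chi> i. 1 + (- (\<theta> * (1 - \<tau>))) * k$i) M"
    using decomp_affine[OF D[folded L_def], of 1 "- (\<theta> * (1 - \<tau>))"] by (simp add: M_def)
  define f1 where "f1 = (\<lambda>x::real. x powr (\<tau> / (\<tau> - 1)))"
  define f2 where "f2 = (\<lambda>x::real. x powr (1 / (\<tau> - 1)))"
  have "gamma \<tau> P \<theta> = trace (- (1 / (\<tau> * (1 - \<tau>))) *\<^sub>R mat_fun f1 M
               + (1 / (1 - \<tau>)) *\<^sub>R mat_fun f2 M + (1 / \<tau>) *\<^sub>R mat 1)"
    using t unfolding gamma_def Let_def L_def[symmetric] M_def[symmetric] f1_def f2_def by simp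
  also have "\<dots> = - (1 / (\<tau> * (1 - \<tau>))) * (\<Sum>i\<in>UNIV. f1 (1 + (- (\<theta> * (1 - \<tau>))) * k$i))
      + (1 / (1 - \<tau>)) * (\<Sum>i\<in>UNIV. f2 (1 + (- (\<theta> * (1 - \<tau>))) * k$i)) + (\<Sum>i\<in>(UNIV::'n set). 1 / \<tau>)"
    by (simp add: trace_add trace_sub trace_scaleR trace_mat_fun[OF DM] trace_I)
  also have "\<dots> = (\<Sum>j\<in>UNIV. Hf \<tau> (\<theta> * k$j))"
  proof -
    have e: "Hf \<tau> (\<theta> * k$j) = - (1 / (\<tau> * (1 - \<tau>))) * f1 (1 + (- (\<theta> * (1 - \<tau>))) * k$j)
      + (1 / (1 - \<tau>)) * f2 (1 + (- (\<theta> * (1 - \<tau>))) * k$j) + 1 / \<tau>" for j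
    proof -
      have ee: "(1 - \<tau>) * (\<theta> * k$j) = \<theta> * (1 - \<tau>) * k$j" by (simp add: algebra_simps)
      show ?thesis using t by (simp add: Hf_def f1_def f2_def ee)
    qed
    show ?thesis unfolding e by (simp only: sum.distrib sum_distrib_left)
  qed
  finally show ?thesis .
qed

lemma gamma_one:
  fixes P :: "real^'n^'n"
  assumes D: "decomp U k (transpose (factor P) ** factor P)"
  shows "gamma 1 P \<theta> = (\<Sum>j\<in>UNIV. Hf 1 (\<theta> * k$j))"
proof -
  define L where "L = factor P"
  define K where "K = \<theta> *\<^sub>R (transpose L ** L)"
  have DK: "decomp U (\<chi> i. 0 + \<theta> * k$i) K"
    using decomp_affine[OF D[folded L_def], of 0 "\<theta>"] by (simp add: K_def)
  obtain U' d' where D': "decomp U' d' K" and E: "mat_fun exp K = U' ** diag_mat (\<chi> i. exp (d'$i)) ** transpose U'"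
    using mat_fun_decomp[OF DK] by blast
  have U': "orthogonal_matrix U'" using D' by (simp add: decomp_def)
  have K1: "K - mat 1 = U' ** diag_mat (\<chi> i. -1 + 1 * d'$i) ** transpose U'"
    using decomp_affine[OF D', of "-1" 1] by (simp add: decomp_def)
  have "mat_fun exp K ** (K - mat 1) = U' ** diag_mat (\<chi> i. exp (d'$i) * (-1 + 1 * d'$i)) ** transpose U'"
    unfolding E K1 decomp_mul[OF U'] by simp
  then have "gamma 1 P \<theta> = (\<Sum>i\<in>UNIV. exp (d'$i) * (d'$i - 1)) + real CARD('n)"
    unfolding gamma_def Let_def L_def[symmetric] K_def[symmetric]
    by (simp add: trace_add trace_decomp[OF U'] trace_I)
  also have "\<dots> = (\<Sum>i\<in>UNIV. Hf 1 (d'$i))"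
    by (simp add: sum.distrib Hf_def)
  also have "\<dots> = (\<Sum>i\<in>UNIV. Hf 1 ((\<chi> i. 0 + \<theta> * k$i)$i))"
    by (rule decomp_indep[OF D' DK])
  finally show ?thesis by simp
qed

lemma gamma_sum:
  fixes P :: "real^'n^'n"
  assumes t: "0 \<le> \<tau>" "\<tau> \<le> 1" and psd: "psd P" and D: "decomp U p P"
    and lt: "\<tau> = 0 \<Longrightarrow> (\<And>j. \<theta> * p$j < 1)"
  shows "gamma \<tau> P \<theta> = (\<Sum>j\<in>UNIV. Hf \<tau> (\<theta> * p$j))"
proof (cases "\<tau> = 0")
  case True
  then show ?thesis using gamma_zero[OF D lt] by simp
next
  case False
  define L where "L = factor P"
  have PL: "P = L ** transpose L" using psd_factor[OF psd] by (simp add: L_def)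
  have "transpose (transpose L ** L) = transpose L ** L" by (simp add: matrix_transpose_mul)
  then obtain V k where DV: "decomp V k (transpose L ** L)" using spectral by blast
  have "gamma \<tau> P \<theta> = (\<Sum>j\<in>UNIV. Hf \<tau> (\<theta> * k$j))"
  proof (cases "\<tau> < 1")
    case True
    then show ?thesis using gamma_mid[of \<tau> V k P \<theta>] DV False t by (simp add: L_def)
  next
    case False
    then have "\<tau> = 1" using t by simp
    then show ?thesis using gamma_one[of V k P \<theta>] DV by (simp add: L_def)
  qed
  also have "\<dots> = (\<Sum>j\<in>UNIV. Hf \<tau> (\<theta> * p$j))"
    using decomp_transfer[OF DV, of U p "\<lambda>x. Hf \<tau> (\<theta> * x)"] D PL Hf_0[OF t] by simp
  finally show ?thesis .
qed

lemma peierls: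
  fixes P Q :: "real^'n^'n" and f :: "real \<Rightarrow> real"
  assumes DP: "decomp U p P" and DQ: "decomp V q Q" and PQ: "psd (P - Q)"
    and pr: "\<And>j. 0 \<le> p$j \<and> p$j \<le> R" and qn: "\<And>i. 0 \<le> q$i"
    and mono: "\<And>x y. 0 \<le> x \<Longrightarrow> x \<le> y \<Longrightarrow> y \<le> R \<Longrightarrow> f x \<le> f y"
    and conv: "convex_on {0..R} f"
  shows "(\<forall>i. q$i \<le> R) \<and> (\<Sum>i\<in>UNIV. f (q$i)) \<le> (\<Sum>j\<in>UNIV. f (p$j))"
proof -
  have U: "orthogonal_matrix U" and V: "orthogonal_matrix V" using DP DQ by (auto simp: decomp_def)
  define W where "W = transpose V ** U"
  have "transpose W ** W = transpose U ** (V ** transpose V) ** U"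
    by (simp add: W_def matrix_transpose_mul matrix_mul_assoc)
  also have "\<dots> = mat 1" by (simp add: orth_UUt[OF V] orth_UtU[OF U])
  finally have c: "transpose W ** W = mat 1" .
  have cs: "(\<Sum>i\<in>UNIV. (W$i$j)^2) = 1" for j
    using c WtW_diag[of W j] by (simp add: mat_def)
  have "W ** transpose W = transpose V ** (U ** transpose U) ** V"
    by (simp add: W_def matrix_transpose_mul matrix_mul_assoc)
  also have "\<dots> = mat 1" by (simp add: orth_UUt[OF U] orth_UtU[OF V])
  finally have r: "W ** transpose W = mat 1" .
  have rs: "(\<Sum>j\<in>UNIV. (W$i$j)^2) = 1" for i
    using r WWt_diag[of W i] by (simp add: mat_def)
  define s where "s i = (\<Sum>j\<in>UNIV. (W$i$j)^2 * p$j)" for i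
  have VPV: "transpose V ** P ** V = W ** diag_mat p ** transpose W"
    using DP by (simp add: decomp_def W_def matrix_transpose_mul matrix_mul_assoc)
  have sP: "(transpose V ** P ** V) $ i $ i = s i" for i
    unfolding VPV udu_entry s_def by (simp add: power2_eq_square mult_ac)
  have qQ: "(transpose V ** Q ** V) $ i $ i = q $ i" for i
    using decomp_UtAU[OF DQ] by (simp add: diag_mat_def)
  have qs: "q$i \<le> s i" for i
  proof -
    have "0 \<le> column i V \<bullet> ((P - Q) *v column i V)" using PQ by (simp add: psd_def)
    then have "0 \<le> column i V \<bullet> (P *v column i V) - column i V \<bullet> (Q *v column i V)"
      by (simp add: matrix_vector_mult_diff_rdistrib inner_diff_right)
    then show ?thesis using sP[of i] qQ[of i] quad_entry[of V P i] quad_entry[of V Q i] by simp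
  qed
  have s0: "0 \<le> s i" for i using pr by (simp add: s_def sum_nonneg)
  have sR: "s i \<le> R" for i
  proof -
    have "s i \<le> (\<Sum>j\<in>UNIV. (W$i$j)^2 * R)" unfolding s_def
      using pr by (intro sum_mono mult_left_mono) auto
    also have "\<dots> = R" using rs[of i] by (simp add: sum_distrib_right[symmetric])
    finally show ?thesis .
  qed
  have fi: "f (q$i) \<le> (\<Sum>j\<in>UNIV. (W$i$j)^2 * f (p$j))" for i
  proof -
    have "f (q$i) \<le> f (s i)" using qn[of i] qs[of i] sR[of i] by (rule mono)
    also have "f (s i) = f (\<Sum>j\<in>UNIV. (W$i$j)^2 *\<^sub>R p$j)" by (simp add: s_def)
    also have "\<dots> \<le> (\<Sum>j\<in>UNIV. (W$i$j)^2 * f (p$j))"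
      using pr by (intro convex_on_sum[OF _ _ conv rs[of i]]) auto
    finally show ?thesis .
  qed
  have "(\<Sum>i\<in>UNIV. f (q$i)) \<le> (\<Sum>i\<in>UNIV. \<Sum>j\<in>UNIV. (W$i$j)^2 * f (p$j))"
    by (intro sum_mono fi)
  also have "\<dots> = (\<Sum>j\<in>UNIV. \<Sum>i\<in>UNIV. (W$i$j)^2 * f (p$j))" by (rule sum.swap)
  also have "\<dots> = (\<Sum>j\<in>UNIV. f (p$j))" by (simp add: sum_distrib_right[symmetric] cs)
  finally show ?thesis using qs sR by (meson order_trans)
qed

lemma dom_bound:
  fixes \<tau> t x N :: real
  assumes "0 \<le> \<tau>" "\<tau> \<le> 1" "0 \<le> t" "x \<le> N" "t * (1 - \<tau>) * N < 1"
  shows "(1 - \<tau>) * (t * x) < 1"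
proof -
  have c: "0 \<le> t * (1 - \<tau>)" using assms by (simp add: mult_nonneg_nonneg)
  have "(t * (1 - \<tau>)) * x \<le> (t * (1 - \<tau>)) * N" using mult_left_mono[OF assms(4) c] .
  then show ?thesis using assms(5) by (simp add: algebra_simps)
qed

theorem lemma4:
  fixes P :: "real^'n^'n" and \<tau> \<theta> :: real
  assumes "0 \<le> \<tau>" "\<tau> \<le> 1"
    and "psd P"
    and "0 < \<theta>" "\<theta> * (1 - \<tau>) * spec_norm P < 1"
  shows "(\<forall>s t. 0 < s \<and> s \<le> t \<and> t * (1 - \<tau>) * spec_norm P < 1
            \<longrightarrow> gamma \<tau> P s \<le> gamma \<tau> P t)
       \<and> (\<forall>Q :: real^'n^'n. psd Q \<and> loewner_ge P Q \<longrightarrow> gamma \<tau> Q \<theta> \<le> gamma \<tau> P \<theta>)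
       \<and> (P \<noteq> 0 \<longrightarrow> 0 < gamma \<tau> P \<theta>)"
proof -
  note t = assms(1,2)
  define N where "N = spec_norm P"
  obtain U p where DP: "decomp U p P" using spectral[of P] assms(3) by (auto simp: psd_def)
  have p0: "0 \<le> p$j" for j by (rule decomp_psd_nonneg[OF DP assms(3)])
  have pN: "p$j \<le> N" for j using decomp_le_norm[OF DP, of j] by (simp add: N_def)
  have N0: "0 \<le> N" using p0 pN order_trans by blast
  have gsum: "gamma \<tau> P s = (\<Sum>j\<in>UNIV. Hf \<tau> (s * p$j))" if "0 < s" "s * (1 - \<tau>) * N < 1" for s
  proof (rule gamma_sum[OF t assms(3) DP])
    fix j assume "\<tau> = 0"
    then show "s * p$j < 1" using dom_bound[OF t _ pN that(2)] that(1) by simp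
  qed
  have part1: "\<forall>s t. 0 < s \<and> s \<le> t \<and> t * (1 - \<tau>) * spec_norm P < 1 \<longrightarrow> gamma \<tau> P s \<le> gamma \<tau> P t"
  proof (intro allI impI)
    fix s t' assume st: "0 < s \<and> s \<le> t' \<and> t' * (1 - \<tau>) * spec_norm P < 1"
    then have st': "0 < s" "s \<le> t'" "t' * (1 - \<tau>) * N < 1" by (auto simp: N_def)
    have "s * (1 - \<tau>) * N \<le> t' * (1 - \<tau>) * N" using st' t N0 by (intro mult_right_mono) auto
    then have sN: "s * (1 - \<tau>) * N < 1" using st' by linarith
    have "(\<Sum>j\<in>UNIV. Hf \<tau> (s * p$j)) \<le> (\<Sum>j\<in>UNIV. Hf \<tau> (t' * p$j))"
    proof (rule sum_mono)
      fix j
      show "Hf \<tau> (s * p$j) \<le> Hf \<tau> (t' * p$j)"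
        using st' p0[of j] dom_bound[OF t _ pN st'(3), of j]
        by (intro Hf_mono[OF t]) (auto intro: mult_right_mono)
    qed
    then show "gamma \<tau> P s \<le> gamma \<tau> P t'" using gsum[OF st'(1) sN] gsum[of t'] st' by simp
  qed
  have thN: "\<theta> * (1 - \<tau>) * N < 1" using assms(5) by (simp add: N_def)
  have part2: "\<forall>Q :: real^'n^'n. psd Q \<and> loewner_ge P Q \<longrightarrow> gamma \<tau> Q \<theta> \<le> gamma \<tau> P \<theta>"
  proof (intro allI impI)
    fix Q :: "real^'n^'n" assume Q: "psd Q \<and> loewner_ge P Q"
    obtain V q where DQ: "decomp V q Q" using spectral[of Q] Q by (auto simp: psd_def)
    have q0: "0 \<le> q$i" for i by (rule decomp_psd_nonneg[OF DQ]) (use Q in simp)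
    have mono: "Hf \<tau> (\<theta> * x) \<le> Hf \<tau> (\<theta> * y)" if "0 \<le> x" "x \<le> y" "y \<le> N" for x y
      using that assms(4) dom_bound[OF t _ that(3) thN]
      by (intro Hf_mono[OF t]) (auto intro: mult_left_mono)
    have conv: "convex_on {0..N} (\<lambda>x. Hf \<tau> (\<theta> * x))"
      using Hf_conv[OF t assms(4)] dom_bound[OF t _ order_refl thN] assms(4) by simp
    have pe: "(\<forall>i. q$i \<le> N) \<and> (\<Sum>i\<in>UNIV. Hf \<tau> (\<theta> * q$i)) \<le> (\<Sum>j\<in>UNIV. Hf \<tau> (\<theta> * p$j))"
      using Q unfolding loewner_ge_def
      by (intro peierls[OF DP DQ, where f="\<lambda>x. Hf \<tau> (\<theta> * x)"] conv) (auto simp: p0 pN q0 mono)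
    have "gamma \<tau> Q \<theta> = (\<Sum>i\<in>UNIV. Hf \<tau> (\<theta> * q$i))"
    proof (rule gamma_sum[OF t _ DQ])
      show "psd Q" using Q by simp
      fix i assume "\<tau> = 0"
      then show "\<theta> * q$i < 1" using dom_bound[OF t _ _ thN, of "q$i"] pe assms(4) by simp
    qed
    then show "gamma \<tau> Q \<theta> \<le> gamma \<tau> P \<theta>" using pe gsum[OF assms(4) thN] by simp
  qed
  have part3: "P \<noteq> 0 \<longrightarrow> 0 < gamma \<tau> P \<theta>"
  proof
    assume P0: "P \<noteq> 0"
    have "\<exists>j. p$j \<noteq> 0"
    proof (rule ccontr)
      assume "\<not> (\<exists>j. p$j \<noteq> 0)"
      then have "diag_mat p = 0" by (simp add: diag_mat_def vec_eq_iff)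
      then have "P = 0" using DP by (simp add: decomp_def)
      then show False using P0 by simp
    qed
    then obtain j where pj: "0 < p$j" using p0 less_eq_real_def by metis
    have nn: "0 \<le> Hf \<tau> (\<theta> * p$i)" for i
      using p0[of i] assms(4) dom_bound[OF t _ pN thN, of i] by (intro Hf_nonneg[OF t]) auto
    have "0 < Hf \<tau> (\<theta> * p$j)"
      using pj assms(4) dom_bound[OF t _ pN thN, of j] by (intro Hf_pos[OF t]) auto
    also have "\<dots> \<le> (\<Sum>i\<in>UNIV. Hf \<tau> (\<theta> * p$i))"
      by (rule member_le_sum) (auto simp: nn)
    finally show "0 < gamma \<tau> P \<theta>" using gsum[OF assms(4) thN] by simp
  qed
  show ?thesis using part1 part2 part3 by blast
qed

end
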